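(* Let $\mathcal Q$ be a question space, $\mathcal A$ an answer space, $\Delta(\mathcal A)$ the set of probability measures on $\mathcal A$, $p_0$ a distribution on $\mathcal Q$, $s:\mathcal Q\times\mathcal A\to[0,1]$ a reward function, and $\tau\in(0,1]$ a threshold. Let $\Pi\subset(\mathcal Q\to\Delta(\mathcal A))$ be a finite model class, the models being written $\pi_\theta$. Fix an iteration $t$ with current model $\hat\theta_t$, and suppose that the conditional distribution over answers induced by the filtered distribution \[ D'_{p_0,\hat\theta_t}(q,a)=\frac{p_0(q)\,\pi_{\hat\theta_t}(a\mid q)\,\mathbf 1_{\{s(q,a)\ge\tau\}}}{Z_{p_0}(\hat\theta_t)}, \] namely $a\mapsto \pi_{\hat\theta_t}(a\mid q)\mathbf 1_{\{s(q,a)\ge\tau\}}/\alpha(\hat\theta_t,q)$, belongs to $\Pi$. Sample $n$ questions $q\sim p_0$ i.i.d. For each sampled $q$, draw $m\ge 1$ i.i.d. candidates $a_1,\dots,a_m\sim\pi_{\hat\theta_t}(\cdot\mid q)$ sequentially and keep the first accepted one: include $(q,a_j)$ in the training data, where $j:=\min\{i\in[m]: s(q,a_i)\ge\tau\}$, and discard $q$ if no such $j$ exists. Let $n_t^{(m)}$ be the resulting number of accepted pairs $\{(q_i,a_i)\}_{i=1}^{n_t^{(m)}}$, and let \[ \hat\theta_{t+1}=\arg\max_{\theta:\ \pi_\theta\in\Pi}\ \frac{1}{n_t^{(m)}}\sum_{i=1}^{n_t^{(m)}}\log\pi_\theta(a_i\mid q_i). \] Assume $\operatorname{ess\,inf}_{q}\alpha(\hat\theta_t,q)>0$.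 Then for any $\delta\in(0,1)$, with probability at least $1-\delta$, \[ V_{p_0}(\hat\theta_{t+1})\ \ge\ \tau\left(1-\frac{Z^{(m)}_{p_0}(\hat\theta_t)}{\alpha^{(m)}(\hat\theta_t)}\sqrt{\frac{2\log(|\Pi|\,\delta^{-1})}{n_t^{(m)}}}\right), \] where $\alpha^{(m)}(\hat\theta_t,q):=1-(1-\alpha(\hat\theta_t,q))^m$, $Z^{(m)}_{p_0}(\hat\theta_t):=\mathbb E_{q\sim p_0}[\alpha^{(m)}(\hat\theta_t,q)]$, and $\alpha^{(m)}(\hat\theta_t):=\operatorname{ess\,inf}_q\alpha^{(m)}(\hat\theta_t,q)$. Moreover, the ratio $Z^{(m)}_{p_0}(\hat\theta_t)/\alpha^{(m)}(\hat\theta_t)$ is non-increasing in $m$ and $\lim_{m\to\infty}Z^{(m)}_{p_0}(\hat\theta_t)/\alpha^{(m)}(\hat\theta_t)=1$.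
   Context: An autoregressive model with parameters $\theta$ gives conditional answer distributions $\pi_\theta(\cdot\mid q)$. Per-question acceptance rate: $\alpha(\theta,q):=\Pr_{a\sim\pi_\theta(\cdot\mid q)}[s(q,a)\ge\tau]$, assumed positive; global acceptance rate $Z_p(\theta):=\mathbb E_{q\sim p}[\alpha(\theta,q)]$. Expected reward: $V_{p}(\theta):=\mathbb E_{q\sim p,\,a\sim\pi_\theta(\cdot\mid q)}[s(q,a)]$. The probability is over the sampling of questions and candidate answers. *)

theory Defs
  imports "HOL-Probability.Probability"
begin

definition acc_rate :: "('q \<Rightarrow> 'a pmf) \<Rightarrow> ('q \<Rightarrow> 'a \<Rightarrow> real) \<Rightarrow> real \<Rightarrow> 'q \<Rightarrow> real" where
  "acc_rate \<pi> s \<tau> q = measure_pmf.prob (\<pi> q) {a. \<tau> \<le> s q a}"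

definition acc_rate_m :: "nat \<Rightarrow> ('q \<Rightarrow> 'a pmf) \<Rightarrow> ('q \<Rightarrow> 'a \<Rightarrow> real) \<Rightarrow> real \<Rightarrow> 'q \<Rightarrow> real" where
  "acc_rate_m m \<pi> s \<tau> q = 1 - (1 - acc_rate \<pi> s \<tau> q) ^ m"

definition ess_inf :: "'b measure \<Rightarrow> ('b \<Rightarrow> real) \<Rightarrow> ereal" where
  "ess_inf M f = - esssup M (\<lambda>x. - ereal (f x))"

definition glob_acc_m :: "nat \<Rightarrow> 'q pmf \<Rightarrow> ('q \<Rightarrow> 'a pmf) \<Rightarrow> ('q \<Rightarrow> 'a \<Rightarrow> real) \<Rightarrow> real \<Rightarrow> real" where
  "glob_acc_m m p0 \<pi> s \<tau> = measure_pmf.expectation p0 (acc_rate_m m \<pi> s \<tau>)"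

definition ess_acc_m :: "nat \<Rightarrow> 'q pmf \<Rightarrow> ('q \<Rightarrow> 'a pmf) \<Rightarrow> ('q \<Rightarrow> 'a \<Rightarrow> real) \<Rightarrow> real \<Rightarrow> ereal" where
  "ess_acc_m m p0 \<pi> s \<tau> = ess_inf (measure_pmf p0) (acc_rate_m m \<pi> s \<tau>)"

definition exp_reward :: "'q pmf \<Rightarrow> ('q \<Rightarrow> 'a pmf) \<Rightarrow> ('q \<Rightarrow> 'a \<Rightarrow> real) \<Rightarrow> real" where
  "exp_reward p0 \<pi> s =
     measure_pmf.expectation (bind_pmf p0 (\<lambda>q. map_pmf (\<lambda>a. (q, a)) (\<pi> q))) (\<lambda>(q, a). s q a)"

definition sample_pmf :: "nat \<Rightarrow> nat \<Rightarrow> 'q pmf \<Rightarrow> ('q \<Rightarrow> 'a pmf) \<Rightarrow> ('q \<times> 'a list) list pmf" where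
  "sample_pmf n m p0 \<pi> =
     replicate_pmf n (bind_pmf p0 (\<lambda>q. map_pmf (\<lambda>as. (q, as)) (replicate_pmf m (\<pi> q))))"

definition accepted_data :: "('q \<Rightarrow> 'a \<Rightarrow> real) \<Rightarrow> real \<Rightarrow> ('q \<times> 'a list) list \<Rightarrow> ('q \<times> 'a) list" where
  "accepted_data s \<tau> \<omega> =
     List.map_filter (\<lambda>(q, as). map_option (\<lambda>a. (q, a)) (find (\<lambda>a. \<tau> \<le> s q a) as)) \<omega>"

definition ln_ext :: "real \<Rightarrow> ereal" where
  "ln_ext x = (if 0 < x then ereal (ln x) else -\<infinity>)"

definition avg_loglik :: "('q \<Rightarrow> 'a pmf) \<Rightarrow> ('q \<times> 'a) list \<Rightarrow> ereal" where
  "avg_loglik \<pi> D = (\<Sum>(q, a)\<leftarrow>D. ln_ext (pmf (\<pi> q) a)) / ereal (real (length D))"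

end

theory Submission
  imports Defs
begin

lemma ess_inf_le_pmf:
  fixes p :: "'b pmf"
  assumes "x \<in> set_pmf p"
  shows "ess_inf (measure_pmf p) g \<le> ereal (g x)"
proof -
  have "AE y in measure_pmf p. - ereal (g y) \<le> esssup (measure_pmf p) (\<lambda>y. - ereal (g y))"
    by (rule esssup_AE)
  then have "- ereal (g x) \<le> esssup (measure_pmf p) (\<lambda>y. - ereal (g y))"
    using assms by (simp add: AE_measure_pmf_iff)
  then show ?thesis unfolding ess_inf_def
    by (metis ereal_minus_le_minus ereal_uminus_uminus)
qed

lemma ess_inf_ge_pmf:
  fixes p :: "'b pmf"
  assumes "\<And>x. x \<in> set_pmf p \<Longrightarrow> c \<le> g x"
  shows "ereal c \<le> ess_inf (measure_pmf p) g"
proof -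
  have "esssup (measure_pmf p) (\<lambda>y. - ereal (g y)) \<le> - ereal c"
    by (rule esssup_I) (auto simp: AE_measure_pmf_iff assms)
  then show ?thesis unfolding ess_inf_def
    by (metis ereal_minus_le_minus ereal_uminus_uminus)
qed

lemma ratio_step:
  fixes u v :: real and m :: nat
  assumes "0 \<le> u" "u \<le> v" "v < 1"
  shows "(1 - u^Suc m) * (1 - v^m) \<le> (1 - u^m) * (1 - v^Suc m)"
proof -
  have key: "u^m * (\<Sum>i<m. v^i) \<le> v^m * (\<Sum>i<m. u^i)"
    unfolding sum_distrib_left
  proof (rule sum_mono)
    fix i assume "i \<in> {..<m}"
    then have "m = i + (m - i)" by simp
    then have e1: "u^m = u^i * u^(m-i)" and e2: "v^m = v^i * v^(m-i)"
      by (metis power_add)+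
    have "u^(m-i) \<le> v^(m-i)" using assms by (simp add: power_mono)
    then have "u^i * u^(m-i) * v^i \<le> u^i * v^(m-i) * v^i"
      using assms by (intro mult_right_mono mult_left_mono) auto
    then show "u^m * v^i \<le> v^m * u^i" unfolding e1 e2 by (simp add: algebra_simps)
  qed
  have su: "(\<Sum>i<Suc m. u^i) = (\<Sum>i<m. u^i) + u^m" by simp
  have "(\<Sum>i<Suc m. u^i) * (\<Sum>i<m. v^i) \<le> (\<Sum>i<m. u^i) * (\<Sum>i<Suc m. v^i)"
    using key by (simp add: algebra_simps)
  then have "(1-u)*(1-v)*((\<Sum>i<Suc m. u^i) * (\<Sum>i<m. v^i)) \<le> (1-u)*(1-v)*((\<Sum>i<m. u^i) * (\<Sum>i<Suc m. v^i))"
    using assms by (intro mult_left_mono) auto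
  then show ?thesis
    by (simp only: one_diff_power_eq[of u] one_diff_power_eq[of v]) (simp add: algebra_simps)
qed

lemma ess_a0:
  fixes p :: "'b pmf" and f :: "'b \<Rightarrow> real"
  assumes pos: "ess_inf (measure_pmf p) f > 0" and le1: "\<And>q. f q \<le> 1"
  defines "a0 \<equiv> real_of_ereal (ess_inf (measure_pmf p) f)"
  shows "ess_inf (measure_pmf p) f = ereal a0" "0 < a0" "a0 \<le> 1" "\<And>q. q \<in> set_pmf p \<Longrightarrow> a0 \<le> f q"
proof -
  obtain x where x: "x \<in> set_pmf p" using set_pmf_not_empty[of p] by blast
  have up: "ess_inf (measure_pmf p) f \<le> ereal (f x)" by (rule ess_inf_le_pmf[OF x])
  show e: "ess_inf (measure_pmf p) f = ereal a0" unfolding a0_def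
    using pos up by (cases "ess_inf (measure_pmf p) f") auto
  show "0 < a0" using pos e by simp
  show "a0 \<le> 1" using up e le1[of x] by simp
  show "\<And>q. q \<in> set_pmf p \<Longrightarrow> a0 \<le> f q" using ess_inf_le_pmf e by (metis ereal_less_eq(3))
qed

lemma ess_phi:
  fixes p :: "'b pmf" and f :: "'b \<Rightarrow> real"
  assumes e: "ess_inf (measure_pmf p) f = ereal a0" and a0: "0 < a0" "a0 \<le> 1"
    and lb: "\<And>q. q \<in> set_pmf p \<Longrightarrow> a0 \<le> f q" and le1: "\<And>q. f q \<le> 1" and m: "1 \<le> m"
  shows "ess_inf (measure_pmf p) (\<lambda>q. 1 - (1 - f q)^m) = ereal (1 - (1 - a0)^m)"
proof (rule antisym)
  show "ereal (1 - (1 - a0)^m) \<le> ess_inf (measure_pmf p) (\<lambda>q. 1 - (1 - f q)^m)"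
    by (rule ess_inf_ge_pmf) (use lb le1 in \<open>auto intro!: power_mono\<close>)
next
  show "ess_inf (measure_pmf p) (\<lambda>q. 1 - (1 - f q)^m) \<le> ereal (1 - (1 - a0)^m)"
  proof (rule ccontr)
    assume "\<not> ?thesis"
    then have gt: "ereal (1 - (1 - a0)^m) < ess_inf (measure_pmf p) (\<lambda>q. 1 - (1 - f q)^m)" by simp
    obtain x where x: "x \<in> set_pmf p" using set_pmf_not_empty[of p] by blast
    have up: "ess_inf (measure_pmf p) (\<lambda>q. 1 - (1 - f q)^m) \<le> ereal (1 - (1 - f x)^m)"
      by (rule ess_inf_le_pmf[OF x])
    obtain b where b: "ess_inf (measure_pmf p) (\<lambda>q. 1 - (1 - f q)^m) = ereal b"
      using gt up by (cases "ess_inf (measure_pmf p) (\<lambda>q. 1 - (1 - f q)^m)") auto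
    have bgt: "1 - (1 - a0)^m < b" using gt b by simp
    have bq: "b \<le> 1 - (1 - f q)^m" if "q \<in> set_pmf p" for q
      using ess_inf_le_pmf[OF that, of "\<lambda>q. 1 - (1 - f q)^m"] b by simp
    have b1: "b \<le> 1" proof - have "0 \<le> (1 - f x)^m" using le1[of x] by simp then show ?thesis using bq[OF x] by linarith qed
    define a1 where "a1 = 1 - root m (1 - b)"
    have "a1 \<le> f q" if "q \<in> set_pmf p" for q
    proof -
      have "(1 - f q)^m \<le> 1 - b" using bq[OF that] by simp
      then have "root m ((1 - f q)^m) \<le> root m (1 - b)" using m by (simp add: real_root_le_iff)
      moreover have "root m ((1 - f q)^m) = 1 - f q" using m le1[of q]
        by (simp add: real_root_power_cancel)
      ultimately show ?thesis unfolding a1_def by simp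
    qed
    then have "ereal a1 \<le> ess_inf (measure_pmf p) f" by (rule ess_inf_ge_pmf)
    then have "a1 \<le> a0" using e by simp
    moreover have "a0 < a1"
    proof -
      have "1 - b < (1 - a0)^m" using bgt by simp
      then have "root m (1 - b) < root m ((1 - a0)^m)" using m by (simp add: real_root_less_iff)
      moreover have "root m ((1 - a0)^m) = 1 - a0" using m a0 by (simp add: real_root_power_cancel)
      ultimately show ?thesis unfolding a1_def by simp
    qed
    ultimately show False by simp
  qed
qed

lemma pmf_integrable_bounded:
  fixes f :: "'b \<Rightarrow> real"
  assumes "\<And>x. \<bar>f x\<bar> \<le> B"
  shows "integrable (measure_pmf p) f"
  by (rule measure_pmf.integrable_const_bound[where B=B]) (auto simp: assms)

lemma ratio_parts:
  fixes p :: "'b pmf" and f :: "'b \<Rightarrow> real"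
  assumes a0: "0 < a0" "a0 \<le> 1"
    and lb: "\<And>q. q \<in> set_pmf p \<Longrightarrow> a0 \<le> f q" and le1: "\<And>q. f q \<le> 1" and ge0: "\<And>q. 0 \<le> f q"
  defines "Z \<equiv> \<lambda>k. measure_pmf.expectation p (\<lambda>q. 1 - (1 - f q)^k)"
    and "b \<equiv> \<lambda>k. 1 - (1 - a0)^k"
  shows "\<And>m1 m2. 1 \<le> m1 \<Longrightarrow> m1 \<le> m2 \<Longrightarrow> Z m2 / b m2 \<le> Z m1 / b m1"
    and "(\<lambda>k. Z k / b k) \<longlonglongrightarrow> 1"
proof -
  have bpos: "0 < b k" if "1 \<le> k" for k
  proof -
    have "(1 - a0)^k < 1" using a0 that by (subst power_less_one_iff) auto
    then show ?thesis unfolding b_def by simp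
  qed
  have int: "integrable (measure_pmf p) (\<lambda>q. 1 - (1 - f q)^k)" for k
  proof (rule pmf_integrable_bounded[where B=1])
    fix x
    have "0 \<le> (1 - f x)^k" "(1 - f x)^k \<le> 1" using le1[of x] ge0[of x] by (auto intro: power_le_one)
    then show "\<bar>1 - (1 - f x)^k\<bar> \<le> 1" by simp
  qed
  have step: "Z (Suc k) / b (Suc k) \<le> Z k / b k" if k: "1 \<le> k" for k
  proof -
    have "Z (Suc k) * b k = measure_pmf.expectation p (\<lambda>q. (1 - (1 - f q)^Suc k) * b k)"
      unfolding Z_def by simp
    also have "\<dots> \<le> measure_pmf.expectation p (\<lambda>q. (1 - (1 - f q)^k) * b (Suc k))"
    proof (rule integral_mono_AE)
      show "integrable (measure_pmf p) (\<lambda>q. (1 - (1 - f q)^Suc k) * b k)"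
        using int by (intro integrable_mult_left) 
      show "integrable (measure_pmf p) (\<lambda>q. (1 - (1 - f q)^k) * b (Suc k))"
        using int by (intro integrable_mult_left)
      show "AE q in measure_pmf p. (1 - (1 - f q)^Suc k) * b k \<le> (1 - (1 - f q)^k) * b (Suc k)"
        unfolding AE_measure_pmf_iff b_def
      proof
        fix q assume q: "q \<in> set_pmf p"
        show "(1 - (1 - f q)^Suc k) * (1 - (1 - a0)^k) \<le> (1 - (1 - f q)^k) * (1 - (1 - a0)^Suc k)"
          by (rule ratio_step) (use lb[OF q] le1[of q] a0 in auto)
      qed
    qed
    also have "\<dots> = Z k * b (Suc k)" unfolding Z_def by simp
    finally have "Z (Suc k) * b k \<le> Z k * b (Suc k)" .
    then show ?thesis using bpos[OF k] bpos[of "Suc k"] k by (simp add: divide_simps)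
  qed
  show "Z m2 / b m2 \<le> Z m1 / b m1" if "1 \<le> m1" "m1 \<le> m2" for m1 m2
  proof -
    have "Z (m1 + d) / b (m1 + d) \<le> Z m1 / b m1" for d
    proof (induction d)
      case (Suc d)
      have "Z (Suc (m1 + d)) / b (Suc (m1 + d)) \<le> Z (m1 + d) / b (m1 + d)"
        using that by (intro step) auto
      then show ?case using Suc by simp
    qed simp
    from this[of "m2 - m1"] that show ?thesis by simp
  qed
  have lim_b: "b \<longlonglongrightarrow> 1"
  proof -
    have "(\<lambda>k. (1 - a0)^k) \<longlonglongrightarrow> 0" using a0 by (intro LIMSEQ_power_zero) auto
    then have "(\<lambda>k. 1 - (1 - a0)^k) \<longlonglongrightarrow> 1 - 0" by (intro tendsto_diff) auto
    then show ?thesis unfolding b_def by simp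
  qed
  have lo: "1 \<le> Z k / b k" and hi: "Z k / b k \<le> 1 / b k" if "1 \<le> k" for k
  proof -
    have "b k \<le> Z k"
    proof -
      have "measure_pmf.expectation p (\<lambda>q. b k) \<le> Z k" unfolding Z_def
      proof (rule integral_mono_AE)
        show "AE q in measure_pmf p. b k \<le> 1 - (1 - f q)^k"
          unfolding AE_measure_pmf_iff b_def using lb le1 by (auto intro!: power_mono)
      qed (use int in auto)
      then show ?thesis by simp
    qed
    then show "1 \<le> Z k / b k" using bpos[OF that] by simp
    have "Z k \<le> measure_pmf.expectation p (\<lambda>q. 1)" unfolding Z_def
    proof (rule integral_mono_AE)
      show "AE q in measure_pmf p. 1 - (1 - f q)^k \<le> 1"
        unfolding AE_measure_pmf_iff using le1 by auto
    qed (use int in auto)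
    then have "Z k \<le> 1" by simp
    then show "Z k / b k \<le> 1 / b k" using bpos[OF that] by (simp add: divide_right_mono)
  qed
  show "(\<lambda>k. Z k / b k) \<longlonglongrightarrow> 1"
  proof (rule tendsto_sandwich[where f="\<lambda>_. 1" and h="\<lambda>k. 1 / b k"])
    show "\<forall>\<^sub>F k in sequentially. 1 \<le> Z k / b k"
      using lo by (auto simp: eventually_sequentially)
    show "\<forall>\<^sub>F k in sequentially. Z k / b k \<le> 1 / b k"
      using hi by (auto simp: eventually_sequentially)
    have "(\<lambda>k. 1 / b k) \<longlonglongrightarrow> 1 / 1" using lim_b by (intro tendsto_divide) auto
    then show "(\<lambda>k. 1 / b k) \<longlonglongrightarrow> 1" by simp
  qed simp
qed

lemma cond_nn:
  fixes p :: "'b pmf" and g :: "'b \<Rightarrow> ennreal"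
  assumes ne: "set_pmf p \<inter> A \<noteq> {}"
  shows "(\<integral>\<^sup>+x. indicator A x * g x \<partial>measure_pmf p) = ennreal (measure_pmf.prob p A) * (\<integral>\<^sup>+x. g x \<partial>measure_pmf (cond_pmf p A))"
proof -
  have pos: "measure_pmf.prob p A > 0"
    using ne by (metis measure_pmf_posI disjoint_iff)
  have "ennreal (measure_pmf.prob p A) * (\<integral>\<^sup>+x. g x \<partial>measure_pmf (cond_pmf p A))
      = ennreal (measure_pmf.prob p A) * (\<integral>\<^sup>+x. ennreal (pmf (cond_pmf p A) x) * g x \<partial>count_space UNIV)"
    by (simp add: nn_integral_measure_pmf)
  also have "\<dots> = (\<integral>\<^sup>+x. ennreal (measure_pmf.prob p A) * (ennreal (pmf (cond_pmf p A) x) * g x) \<partial>count_space UNIV)"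
    by (rule nn_integral_cmult[symmetric]) simp
  also have "\<dots> = (\<integral>\<^sup>+x. ennreal (pmf p x) * (indicator A x * g x) \<partial>count_space UNIV)"
  proof (rule nn_integral_cong)
    fix x
    show "ennreal (measure_pmf.prob p A) * (ennreal (pmf (cond_pmf p A) x) * g x) = ennreal (pmf p x) * (indicator A x * g x)"
      using pos by (auto simp: pmf_cond[OF ne] indicator_def ennreal_mult'[symmetric] mult.assoc[symmetric])
  qed
  also have "\<dots> = (\<integral>\<^sup>+x. indicator A x * g x \<partial>measure_pmf p)"
    by (simp add: nn_integral_measure_pmf)
  finally show ?thesis by simp
qed

lemma find_nn:
  fixes p :: "'b pmf" and H :: "'b option \<Rightarrow> ennreal"
  assumes ne: "set_pmf p \<inter> {a. P a} \<noteq> {}"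
  defines "\<alpha> \<equiv> measure_pmf.prob p {a. P a}"
  shows "(\<integral>\<^sup>+as. H (find P as) \<partial>measure_pmf (replicate_pmf m p))
       = ennreal ((1 - \<alpha>)^m) * H None + ennreal (1 - (1 - \<alpha>)^m) * (\<integral>\<^sup>+a. H (Some a) \<partial>measure_pmf (cond_pmf p {a. P a}))"
proof (induction m)
  case 0
  then show ?case by simp
next
  case (Suc m)
  define C where "C = (\<integral>\<^sup>+a. H (Some a) \<partial>measure_pmf (cond_pmf p {a. P a}))"
  define X where "X = ennreal ((1 - \<alpha>)^m) * H None + ennreal (1 - (1 - \<alpha>)^m) * C"
  have a01: "0 \<le> \<alpha>" "\<alpha> \<le> 1" unfolding \<alpha>_def by auto
  have pw: "0 \<le> (1-\<alpha>)^m" "(1-\<alpha>)^m \<le> 1" using a01 by (auto intro: power_le_one)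
  have "(\<integral>\<^sup>+as. H (find P as) \<partial>measure_pmf (replicate_pmf (Suc m) p))
      = (\<integral>\<^sup>+x. (\<integral>\<^sup>+xs. H (find P (x # xs)) \<partial>measure_pmf (replicate_pmf m p)) \<partial>measure_pmf p)"
    by simp
  also have "\<dots> = (\<integral>\<^sup>+x. indicator {a. P a} x * H (Some x) + indicator (- {a. P a}) x * X \<partial>measure_pmf p)"
    by (rule nn_integral_cong) (auto simp: Suc X_def C_def indicator_def)
  also have "\<dots> = (\<integral>\<^sup>+x. indicator {a. P a} x * H (Some x) \<partial>measure_pmf p) + (\<integral>\<^sup>+x. indicator (- {a. P a}) x * X \<partial>measure_pmf p)"
    by (rule nn_integral_add) auto
  also have "(\<integral>\<^sup>+x. indicator {a. P a} x * H (Some x) \<partial>measure_pmf p) = ennreal \<alpha> * C"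
    unfolding C_def \<alpha>_def by (rule cond_nn[OF ne])
  also have "(\<integral>\<^sup>+x. indicator (- {a. P a}) x * X \<partial>measure_pmf p) = emeasure (measure_pmf p) (- {a. P a}) * X"
    by (simp add: nn_integral_multc)
  also have "emeasure (measure_pmf p) (- {a. P a}) = ennreal (1 - \<alpha>)"
    unfolding \<alpha>_def by (simp add: measure_pmf.emeasure_eq_measure measure_pmf.prob_compl[symmetric] Compl_eq_Diff_UNIV)
  also have "ennreal \<alpha> * C + ennreal (1 - \<alpha>) * X
      = ennreal ((1 - \<alpha>)^Suc m) * H None + ennreal (1 - (1 - \<alpha>)^Suc m) * C"
  proof -
    have "ennreal \<alpha> * C + ennreal (1 - \<alpha>) * X
        = ennreal ((1 - \<alpha>) * (1 - \<alpha>)^m) * H None + (ennreal \<alpha> + ennreal ((1 - \<alpha>) * (1 - (1 - \<alpha>)^m))) * C"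
      unfolding X_def using a01 pw
      by (simp add: distrib_left distrib_right ennreal_mult' mult.assoc add.commute add.left_commute)
    also have "ennreal \<alpha> + ennreal ((1 - \<alpha>) * (1 - (1 - \<alpha>)^m)) = ennreal (1 - (1 - \<alpha>)^Suc m)"
    proof -
      have "0 \<le> (1 - \<alpha>) * (1 - (1 - \<alpha>)^m)" using a01 pw by simp
      then show ?thesis using a01 by (subst ennreal_plus[symmetric]) (auto simp: algebra_simps)
    qed
    finally show ?thesis by simp
  qed
  finally show ?case by (simp add: C_def)
qed

lemma replicate_prod_nn:
  fixes G :: "'b \<Rightarrow> ennreal"
  shows "(\<integral>\<^sup>+xs. prod_list (map G xs) \<partial>measure_pmf (replicate_pmf n \<mu>)) = (\<integral>\<^sup>+x. G x \<partial>measure_pmf \<mu>)^n"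
proof (induction n)
  case 0
  then show ?case by simp
next
  case (Suc n)
  have "(\<integral>\<^sup>+xs. prod_list (map G xs) \<partial>measure_pmf (replicate_pmf (Suc n) \<mu>))
      = (\<integral>\<^sup>+x. (\<integral>\<^sup>+xs. G x * prod_list (map G xs) \<partial>measure_pmf (replicate_pmf n \<mu>)) \<partial>measure_pmf \<mu>)"
    by simp
  also have "\<dots> = (\<integral>\<^sup>+x. G x * (\<integral>\<^sup>+x. G x \<partial>measure_pmf \<mu>)^n \<partial>measure_pmf \<mu>)"
    by (simp add: nn_integral_cmult Suc)
  also have "\<dots> = (\<integral>\<^sup>+x. G x \<partial>measure_pmf \<mu>)^Suc n"
    by (simp add: nn_integral_multc)
  finally show ?case .
qed

lemma pmf_indicator_nn:
  "(\<integral>\<^sup>+x. ennreal (pmf p x) * indicator A x \<partial>count_space UNIV) = ennreal (measure_pmf.prob p A)"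
  by (simp add: nn_integral_measure_pmf[symmetric] measure_pmf.emeasure_eq_measure)

lemma sqrt_ratio_le:
  fixes x y :: real
  assumes "0 \<le> x" "0 < y"
  shows "y * sqrt (x / y) \<le> (x + y) / 2"
proof -
  have "y * sqrt (x / y) = sqrt (y * y) * sqrt (x / y)" using assms by simp
  also have "\<dots> = sqrt (y * y * (x / y))" by (rule real_sqrt_mult[symmetric])
  also have "\<dots> = sqrt (x * y)" using assms by (simp add: field_simps)
  also have "\<dots> \<le> (x + y) / 2" using assms by (intro arith_geo_mean_sqrt) auto
  finally show ?thesis .
qed

lemma bc_bound:
  fixes \<pi> \<sigma> :: "'b pmf"
  assumes sub: "set_pmf \<sigma> \<subseteq> A"
  shows "(\<integral>\<^sup>+a. ennreal (sqrt (pmf \<pi> a / pmf \<sigma> a)) \<partial>measure_pmf \<sigma>)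
         \<le> ennreal ((measure_pmf.prob \<pi> A + 1) / 2)"
proof -
  have "(\<integral>\<^sup>+a. ennreal (sqrt (pmf \<pi> a / pmf \<sigma> a)) \<partial>measure_pmf \<sigma>)
      = (\<integral>\<^sup>+a. ennreal (pmf \<sigma> a) * ennreal (sqrt (pmf \<pi> a / pmf \<sigma> a)) \<partial>count_space UNIV)"
    by (rule nn_integral_measure_pmf)
  also have "\<dots> \<le> (\<integral>\<^sup>+a. ennreal (1/2) * (ennreal (pmf \<pi> a) * indicator A a + ennreal (pmf \<sigma> a) * indicator A a) \<partial>count_space UNIV)"
  proof (rule nn_integral_mono)
    fix a
    show "ennreal (pmf \<sigma> a) * ennreal (sqrt (pmf \<pi> a / pmf \<sigma> a))
          \<le> ennreal (1/2) * (ennreal (pmf \<pi> a) * indicator A a + ennreal (pmf \<sigma> a) * indicator A a)"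
    proof (cases "pmf \<sigma> a = 0")
      case True
      then show ?thesis by simp
    next
      case False
      then have "a \<in> set_pmf \<sigma>" by (simp add: set_pmf_iff)
      with sub have aA: "a \<in> A" by auto
      have pos: "0 < pmf \<sigma> a" using False pmf_nonneg[of \<sigma> a] by linarith
      have "ennreal (pmf \<sigma> a) * ennreal (sqrt (pmf \<pi> a / pmf \<sigma> a)) = ennreal (pmf \<sigma> a * sqrt (pmf \<pi> a / pmf \<sigma> a))"
        by (simp add: ennreal_mult'')
      also have "\<dots> \<le> ennreal ((pmf \<pi> a + pmf \<sigma> a) / 2)"
        by (rule ennreal_leI, rule sqrt_ratio_le) (use pos in auto)
      also have "\<dots> = ennreal (1/2) * (ennreal (pmf \<pi> a) * indicator A a + ennreal (pmf \<sigma> a) * indicator A a)"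
      proof -
        have "ennreal ((pmf \<pi> a + pmf \<sigma> a) / 2) = ennreal ((1/2) * (pmf \<pi> a + pmf \<sigma> a))" by simp
        also have "\<dots> = ennreal (1/2) * ennreal (pmf \<pi> a + pmf \<sigma> a)" by (rule ennreal_mult'') simp
        also have "\<dots> = ennreal (1/2) * (ennreal (pmf \<pi> a) + ennreal (pmf \<sigma> a))"
          by (simp only: ennreal_plus[OF pmf_nonneg pmf_nonneg])
        finally have "ennreal ((pmf \<pi> a + pmf \<sigma> a) / 2) = ennreal (1/2) * (ennreal (pmf \<pi> a) + ennreal (pmf \<sigma> a))" .
        then show ?thesis using aA by simp
      qed
      finally show ?thesis .
    qed
  qed
  also have "\<dots> = ennreal (1/2) * (ennreal (measure_pmf.prob \<pi> A) + ennreal (measure_pmf.prob \<sigma> A))"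
    by (simp add: nn_integral_cmult nn_integral_add pmf_indicator_nn)
  also have "measure_pmf.prob \<sigma> A = 1"
    using sub by (subst measure_pmf.prob_eq_1) (auto simp: AE_measure_pmf_iff)
  also have "ennreal (1/2) * (ennreal (measure_pmf.prob \<pi> A) + ennreal 1) = ennreal ((measure_pmf.prob \<pi> A + 1) / 2)"
  proof -
    have "ennreal ((measure_pmf.prob \<pi> A + 1) / 2) = ennreal ((1/2) * (measure_pmf.prob \<pi> A + 1))" by simp
    also have "\<dots> = ennreal (1/2) * ennreal (measure_pmf.prob \<pi> A + 1)" by (rule ennreal_mult'') simp
    also have "\<dots> = ennreal (1/2) * (ennreal (measure_pmf.prob \<pi> A) + ennreal 1)"
      by (simp only: ennreal_plus[OF measure_nonneg zero_le_one])
    finally show ?thesis by simp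
  qed
  finally show ?thesis .
qed

lemma prod_list_ennreal:
  assumes "\<And>x. 0 \<le> f x"
  shows "prod_list (map (\<lambda>x. ennreal (f x)) D) = ennreal (prod_list (map f D))"
  using assms by (induction D) (auto simp: ennreal_mult' prod_list_nonneg)

lemma prod_list_mult_const:
  "prod_list (map (\<lambda>x. f x * (e::real)) D) = prod_list (map f D) * e ^ length D"
  by (induction D) (auto simp: algebra_simps)

lemma sum_ln_ext:
  assumes "\<And>x. 0 \<le> f x"
  shows "sum_list (map (\<lambda>x. ln_ext (f x)) D) =
         (if \<forall>x\<in>set D. 0 < f x then ereal (ln (prod_list (map f D))) else -\<infinity>)"
proof (induction D)
  case Nil
  then show ?case by simp
next
  case (Cons y D)
  show ?case
  proof (cases "0 < f y")
    case True
    note fy = True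
    show ?thesis
    proof (cases "\<forall>x\<in>set D. 0 < f x")
      case True
      have "0 < prod_list (map f D)" using True by (induction D) auto
      then show ?thesis using Cons fy True by (simp add: ln_ext_def ln_mult)
    next
      case False
      then show ?thesis using Cons fy by (auto simp: ln_ext_def)
    qed
  next
    case False
    then have "f y = 0" using assms[of y] by simp
    moreover have "sum_list (map (\<lambda>x. ln_ext (f x)) D) \<noteq> \<infinity>"
      using Cons.IH by auto
    ultimately show ?thesis by (auto simp: ln_ext_def)
  qed
qed

lemma loglik_ratio:
  fixes f g :: "'b \<Rightarrow> real"
  assumes f0: "\<And>x. 0 \<le> f x" and g0: "\<And>x. 0 \<le> g x" and gpos: "\<And>x. x \<in> set D \<Longrightarrow> 0 < g x"
    and N: "0 < length D"
    and le: "sum_list (map (\<lambda>x. ln_ext (g x)) D) / ereal (real (length D))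
             \<le> sum_list (map (\<lambda>x. ln_ext (f x)) D) / ereal (real (length D))"
  shows "1 \<le> prod_list (map (\<lambda>x. sqrt (f x / g x)) D)"
proof -
  have Gpos: "0 < prod_list (map g D)" using gpos by (induction D) auto
  have sg: "sum_list (map (\<lambda>x. ln_ext (g x)) D) = ereal (ln (prod_list (map g D)))"
    using sum_ln_ext[of g D] g0 gpos by auto
  have fpos: "\<forall>x\<in>set D. 0 < f x"
  proof (rule ccontr)
    assume "\<not> ?thesis"
    then have "sum_list (map (\<lambda>x. ln_ext (f x)) D) = -\<infinity>" using sum_ln_ext[of f D] f0 by auto
    then show False using le sg N by simp
  qed
  have Fpos: "0 < prod_list (map f D)" using fpos by (induction D) auto
  have sf: "sum_list (map (\<lambda>x. ln_ext (f x)) D) = ereal (ln (prod_list (map f D)))"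
    using sum_ln_ext[of f D] f0 fpos by auto
  have "ln (prod_list (map g D)) / real (length D) \<le> ln (prod_list (map f D)) / real (length D)"
    using le N unfolding sf sg by simp
  then have "ln (prod_list (map g D)) \<le> ln (prod_list (map f D))"
    using N by (simp add: divide_right_mono_neg divide_le_cancel)
  then have GF: "prod_list (map g D) \<le> prod_list (map f D)" using Gpos Fpos by simp
  have e1: "prod_list (map (\<lambda>x. sqrt (h x)) D') = sqrt (prod_list (map h D'))" for h :: "'b \<Rightarrow> real" and D'
    by (induction D') (auto simp: real_sqrt_mult)
  have e2: "prod_list (map (\<lambda>x. f x / g x) D) = prod_list (map f D) / prod_list (map g D)"
    by (induction D) auto
  have "prod_list (map (\<lambda>x. sqrt (f x / g x)) D) = sqrt (prod_list (map f D) / prod_list (map g D))"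
    using e1[of "\<lambda>x. f x / g x" D] e2 by simp
  also have "1 \<le> \<dots>" using GF Gpos by simp
  finally show ?thesis .
qed

definition Fw :: "('q \<Rightarrow> 'a pmf) \<Rightarrow> ('q \<Rightarrow> 'a pmf) \<Rightarrow> real \<Rightarrow> ('q \<times> 'a) option \<Rightarrow> ennreal" where
  "Fw \<pi> \<sigma> e x = (case x of None \<Rightarrow> 1 | Some (q, a) \<Rightarrow> ennreal (sqrt (pmf (\<pi> q) a / pmf (\<sigma> q) a) * e))"

definition obs :: "('q \<Rightarrow> 'a \<Rightarrow> bool) \<Rightarrow> 'q \<times> 'a list \<Rightarrow> ('q \<times> 'a) option" where
  "obs P = (\<lambda>(q, as). map_option (\<lambda>a. (q, a)) (find (P q) as))"

lemma mgf_bound: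
  fixes p0 :: "'q pmf" and pt \<pi> :: "'q \<Rightarrow> 'a pmf" and P :: "'q \<Rightarrow> 'a \<Rightarrow> bool" and h :: real and m :: nat
  assumes ne: "\<And>q. set_pmf (pt q) \<inter> {a. P q a} \<noteq> {}"
  defines "\<alpha> \<equiv> \<lambda>q. measure_pmf.prob (pt q) {a. P q a}"
  defines "\<phi> \<equiv> \<lambda>q. 1 - (1 - \<alpha> q)^m"
  defines "\<rho> \<equiv> \<lambda>q. 1 - measure_pmf.prob (\<pi> q) {a. P q a}"
  defines "Z \<equiv> measure_pmf.expectation p0 \<phi>"
  defines "W \<equiv> measure_pmf.expectation p0 (\<lambda>q. \<phi> q * \<rho> q)"
  assumes hW: "W = 2 * Z * h"
  shows "(\<integral>\<^sup>+y. Fw \<pi> (\<lambda>q. cond_pmf (pt q) {a. P q a}) (exp h) (obs P y)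
            \<partial>measure_pmf (bind_pmf p0 (\<lambda>q. map_pmf (\<lambda>as. (q, as)) (replicate_pmf m (pt q))))) \<le> 1"
proof -
  define \<sigma> where "\<sigma> = (\<lambda>q. cond_pmf (pt q) {a. P q a})"
  define g where "g = (\<lambda>q. (1 - \<alpha> q)^m + \<phi> q * exp h * (1 - \<rho> q / 2))"
  have a01: "0 \<le> \<alpha> q" "\<alpha> q \<le> 1" for q unfolding \<alpha>_def by auto
  have r01: "0 \<le> \<rho> q" "\<rho> q \<le> 1" for q unfolding \<rho>_def by auto
  have pw: "0 \<le> (1 - \<alpha> q)^m" "(1 - \<alpha> q)^m \<le> 1" for q using a01[of q] by (auto intro: power_le_one)
  have f01: "0 \<le> \<phi> q" "\<phi> q \<le> 1" for q using pw[of q] unfolding \<phi>_def by auto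
  have inner: "(\<integral>\<^sup>+as. Fw \<pi> \<sigma> (exp h) (obs P (q, as)) \<partial>measure_pmf (replicate_pmf m (pt q))) \<le> ennreal (g q)" for q
  proof -
    define H where "H = (\<lambda>x. Fw \<pi> \<sigma> (exp h) (map_option (\<lambda>a. (q, a)) x))"
    have "(\<integral>\<^sup>+as. Fw \<pi> \<sigma> (exp h) (obs P (q, as)) \<partial>measure_pmf (replicate_pmf m (pt q)))
        = (\<integral>\<^sup>+as. H (find (P q) as) \<partial>measure_pmf (replicate_pmf m (pt q)))"
      by (simp add: H_def obs_def)
    also have "\<dots> = ennreal ((1 - \<alpha> q)^m) * H None + ennreal (\<phi> q) * (\<integral>\<^sup>+a. H (Some a) \<partial>measure_pmf (\<sigma> q))"
      unfolding \<alpha>_def \<phi>_def \<sigma>_def by (rule find_nn[OF ne])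
    also have "H None = 1" by (simp add: H_def Fw_def)
    also have "(\<integral>\<^sup>+a. H (Some a) \<partial>measure_pmf (\<sigma> q))
        = ennreal (exp h) * (\<integral>\<^sup>+a. ennreal (sqrt (pmf (\<pi> q) a / pmf (\<sigma> q) a)) \<partial>measure_pmf (\<sigma> q))"
      by (simp add: H_def Fw_def nn_integral_cmult[symmetric] ennreal_mult'' mult.commute)
    also have "(\<integral>\<^sup>+a. ennreal (sqrt (pmf (\<pi> q) a / pmf (\<sigma> q) a)) \<partial>measure_pmf (\<sigma> q))
        \<le> ennreal ((measure_pmf.prob (\<pi> q) {a. P q a} + 1) / 2)"
      by (rule bc_bound) (simp add: \<sigma>_def set_cond_pmf[OF ne])
    also have "(measure_pmf.prob (\<pi> q) {a. P q a} + 1) / 2 = 1 - \<rho> q / 2"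
      unfolding \<rho>_def by (simp add: field_simps)
    finally have "(\<integral>\<^sup>+as. Fw \<pi> \<sigma> (exp h) (obs P (q, as)) \<partial>measure_pmf (replicate_pmf m (pt q)))
        \<le> ennreal ((1 - \<alpha> q)^m) * 1 + ennreal (\<phi> q) * (ennreal (exp h) * ennreal (1 - \<rho> q / 2))"
      by (simp add: mult_left_mono add_left_mono)
    also have "\<dots> = ennreal (g q)"
    proof -
      have n1: "0 \<le> 1 - \<rho> q / 2" using r01[of q] by simp
      have n2: "0 \<le> exp h * (1 - \<rho> q / 2)" using n1 by simp
      have n3: "0 \<le> \<phi> q * (exp h * (1 - \<rho> q / 2))" using n2 f01[of q] by simp
      have "ennreal (\<phi> q) * (ennreal (exp h) * ennreal (1 - \<rho> q / 2)) = ennreal (\<phi> q * (exp h * (1 - \<rho> q / 2)))"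
        using n1 n2 by (simp add: ennreal_mult'')
      then show ?thesis unfolding g_def using pw[of q] n3
        by (simp add: ennreal_plus mult.assoc)
    qed
    finally show ?thesis .
  qed
  have gint: "integrable (measure_pmf p0) g"
  proof (rule pmf_integrable_bounded[where B="1 + exp h"])
    fix q
    have "0 \<le> \<phi> q * exp h * (1 - \<rho> q / 2)" using f01[of q] r01[of q] by simp
    moreover have "\<phi> q * exp h * (1 - \<rho> q / 2) \<le> 1 * exp h * 1"
      using f01[of q] r01[of q] by (intro mult_mono) auto
    ultimately show "\<bar>g q\<bar> \<le> 1 + exp h" unfolding g_def using pw[of q]
      by (simp only: mult_1_left mult_1_right)
  qed
  have int1: "integrable (measure_pmf p0) \<phi>"
    by (rule pmf_integrable_bounded[where B=1]) (use f01 in auto)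
  have int2: "integrable (measure_pmf p0) (\<lambda>q. \<phi> q * \<rho> q)"
    by (rule pmf_integrable_bounded[where B=1]) (use f01 r01 in \<open>auto intro: mult_le_one\<close>)
  have g_eq: "g = (\<lambda>q. 1 - (1 - exp h) * \<phi> q - (exp h / 2) * (\<phi> q * \<rho> q))"
    unfolding g_def \<phi>_def by (auto simp: algebra_simps)
  have Eg: "measure_pmf.expectation p0 g = 1 - (1 - exp h) * Z - (exp h / 2) * W"
    unfolding g_eq Z_def W_def using int1 int2
    by (simp add: Bochner_Integration.integral_diff integral_mult_right)
  also have "\<dots> = 1 - Z + Z * (exp h * (1 - h))" unfolding hW by (simp add: algebra_simps)
  also have "\<dots> \<le> 1"
  proof -
    have "1 - h \<le> exp (-h)" using exp_ge_add_one_self[of "-h"] by simp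
    then have "exp h * (1 - h) \<le> exp h * exp (-h)" by (intro mult_left_mono) auto
    then have "exp h * (1 - h) \<le> 1" by (simp add: exp_minus)
    moreover have "0 \<le> Z" unfolding Z_def using f01 by (simp add: integral_nonneg_AE)
    ultimately have "Z * (exp h * (1 - h)) \<le> Z * 1" by (intro mult_left_mono)
    then show ?thesis by simp
  qed
  finally have Eg1: "measure_pmf.expectation p0 g \<le> 1" .
  have g0: "0 \<le> g q" for q using f01[of q] r01[of q] pw[of q] unfolding g_def by simp
  have "(\<integral>\<^sup>+y. Fw \<pi> \<sigma> (exp h) (obs P y)
            \<partial>measure_pmf (bind_pmf p0 (\<lambda>q. map_pmf (\<lambda>as. (q, as)) (replicate_pmf m (pt q)))))
      = (\<integral>\<^sup>+q. (\<integral>\<^sup>+as. Fw \<pi> \<sigma> (exp h) (obs P (q, as)) \<partial>measure_pmf (replicate_pmf m (pt q))) \<partial>measure_pmf p0)"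
    by simp
  also have "\<dots> \<le> (\<integral>\<^sup>+q. ennreal (g q) \<partial>measure_pmf p0)"
    by (rule nn_integral_mono) (rule inner)
  also have "\<dots> = ennreal (measure_pmf.expectation p0 g)"
    by (rule nn_integral_eq_integral[OF gint]) (simp add: g0)
  also have "\<dots> \<le> 1" using Eg1 by simp
  finally show ?thesis unfolding \<sigma>_def .
qed

definition rr :: "('q \<Rightarrow> 'a pmf) \<Rightarrow> ('q \<Rightarrow> 'a pmf) \<Rightarrow> 'q \<times> 'a \<Rightarrow> real" where
  "rr \<pi> \<sigma> x = sqrt (pmf (\<pi> (fst x)) (snd x) / pmf (\<sigma> (fst x)) (snd x))"

lemma find_SomeD: "find P xs = Some x \<Longrightarrow> x \<in> set xs \<and> P x"
  by (induction xs) (auto split: if_splits)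

lemma prod_obs:
  "prod_list (map (\<lambda>y. Fw \<pi> \<sigma> e (obs P y)) \<omega>)
   = prod_list (map (\<lambda>x. ennreal (rr \<pi> \<sigma> x * e)) (List.map_filter (obs P) \<omega>))"
  by (induction \<omega>) (auto simp: Fw_def rr_def split: option.splits)

lemma set_map_filterD: "x \<in> set (List.map_filter f xs) \<Longrightarrow> \<exists>y\<in>set xs. f y = Some x"
  by (induction xs) (auto split: option.splits)

lemma bad_prob:
  fixes p0 :: "'q pmf" and pt \<pi> :: "'q \<Rightarrow> 'a pmf" and P :: "'q \<Rightarrow> 'a \<Rightarrow> bool" and h c :: real and m n :: nat
  assumes ne: "\<And>q. set_pmf (pt q) \<inter> {a. P q a} \<noteq> {}"
  defines "\<sigma> \<equiv> \<lambda>q. cond_pmf (pt q) {a. P q a}"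
  defines "\<nu> \<equiv> bind_pmf p0 (\<lambda>q. map_pmf (\<lambda>as. (q, as)) (replicate_pmf m (pt q)))"
  assumes hW: "measure_pmf.expectation p0 (\<lambda>q. (1 - (1 - measure_pmf.prob (pt q) {a. P q a})^m) * (1 - measure_pmf.prob (\<pi> q) {a. P q a}))
     = 2 * measure_pmf.expectation p0 (\<lambda>q. 1 - (1 - measure_pmf.prob (pt q) {a. P q a})^m) * h"
  shows "measure_pmf.prob (replicate_pmf n \<nu>)
           {\<omega>. let D = List.map_filter (obs P) \<omega> in
                 0 < length D \<and> avg_loglik \<sigma> D \<le> avg_loglik \<pi> D \<and> c < real (length D) * h}
         \<le> exp (- c)"
proof -
  define Bad where "Bad = {\<omega>. let D = List.map_filter (obs P) \<omega> in
                 0 < length D \<and> avg_loglik \<sigma> D \<le> avg_loglik \<pi> D \<and> c < real (length D) * h}"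
  define G where "G = (\<lambda>y. Fw \<pi> \<sigma> (exp h) (obs P y))"
  have mgf: "(\<integral>\<^sup>+y. G y \<partial>measure_pmf \<nu>) \<le> 1"
    unfolding G_def \<nu>_def \<sigma>_def
    by (rule mgf_bound[OF ne hW])
  have pw: "indicator Bad \<omega> \<le> ennreal (exp (- c)) * prod_list (map G \<omega>)"
    if \<omega>: "\<omega> \<in> set_pmf (replicate_pmf n \<nu>)" for \<omega>
  proof (cases "\<omega> \<in> Bad")
    case False
    then show ?thesis by simp
  next
    case True
    define D where "D = List.map_filter (obs P) \<omega>"
    have D: "0 < length D" "avg_loglik \<sigma> D \<le> avg_loglik \<pi> D" "c < real (length D) * h"
      using True unfolding Bad_def D_def Let_def by simp_all
    have gpos: "0 < pmf (\<sigma> (fst x)) (snd x)" if x: "x \<in> set D" for x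
    proof -
      obtain y where y: "y \<in> set \<omega>" "obs P y = Some x"
        using set_map_filterD[OF x[unfolded D_def]] by blast
      obtain q as where yqa: "y = (q, as)" by (cases y)
      have "y \<in> set_pmf \<nu>" using \<omega> y(1) by (auto simp: set_replicate_pmf)
      then have as: "set as \<subseteq> set_pmf (pt q)" unfolding \<nu>_def yqa by (auto simp: set_replicate_pmf)
      obtain a where fa: "find (P q) as = Some a" and xa: "x = (q, a)"
        using y(2) unfolding yqa obs_def by auto
      have "a \<in> set as" "P q a" using find_SomeD[OF fa] by auto
      then have "a \<in> set_pmf (pt q) \<inter> {a. P q a}" using as by auto
      then have "a \<in> set_pmf (\<sigma> q)" unfolding \<sigma>_def by (simp only: set_cond_pmf[OF ne])
      then show ?thesis unfolding xa by (simp add: pmf_positive)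
    qed
    have r1: "1 \<le> prod_list (map (rr \<pi> \<sigma>) D)"
    proof -
      have "1 \<le> prod_list (map (\<lambda>x. sqrt (pmf (\<pi> (fst x)) (snd x) / pmf (\<sigma> (fst x)) (snd x))) D)"
      proof (rule loglik_ratio)
        show "sum_list (map (\<lambda>x. ln_ext (pmf (\<sigma> (fst x)) (snd x))) D) / ereal (real (length D))
             \<le> sum_list (map (\<lambda>x. ln_ext (pmf (\<pi> (fst x)) (snd x))) D) / ereal (real (length D))"
          using D(2) unfolding avg_loglik_def by (simp add: case_prod_beta')
      qed (use gpos D(1) in auto)
      then show ?thesis unfolding rr_def .
    qed
    have "prod_list (map G \<omega>) = prod_list (map (\<lambda>x. ennreal (rr \<pi> \<sigma> x * exp h)) D)"
      unfolding G_def D_def by (rule prod_obs)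
    also have "\<dots> = ennreal (prod_list (map (\<lambda>x. rr \<pi> \<sigma> x * exp h) D))"
      by (rule prod_list_ennreal) (simp add: rr_def)
    also have "prod_list (map (\<lambda>x. rr \<pi> \<sigma> x * exp h) D) = prod_list (map (rr \<pi> \<sigma>) D) * exp h ^ length D"
      by (rule prod_list_mult_const)
    finally have pG: "prod_list (map G \<omega>) = ennreal (prod_list (map (rr \<pi> \<sigma>) D) * exp (real (length D) * h))"
      by (simp add: exp_of_nat_mult)
    have "1 \<le> exp (- c) * exp (real (length D) * h)"
      using D(3) by (simp add: exp_add[symmetric])
    also have "\<dots> \<le> exp (- c) * (prod_list (map (rr \<pi> \<sigma>) D) * exp (real (length D) * h))"
      using r1 by simp
    finally have one: "1 \<le> ennreal (exp (- c) * (prod_list (map (rr \<pi> \<sigma>) D) * exp (real (length D) * h)))"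
      by simp
    have "indicator Bad \<omega> = (1::ennreal)" using True by simp
    also have "\<dots> \<le> ennreal (exp (- c) * (prod_list (map (rr \<pi> \<sigma>) D) * exp (real (length D) * h)))"
      by (rule one)
    also have "\<dots> = ennreal (exp (- c)) * ennreal (prod_list (map (rr \<pi> \<sigma>) D) * exp (real (length D) * h))"
      by (rule ennreal_mult') simp
    finally show ?thesis unfolding pG .
  qed
  have "emeasure (measure_pmf (replicate_pmf n \<nu>)) Bad = (\<integral>\<^sup>+\<omega>. indicator Bad \<omega> \<partial>measure_pmf (replicate_pmf n \<nu>))"
    by simp
  also have "\<dots> \<le> (\<integral>\<^sup>+\<omega>. ennreal (exp (- c)) * prod_list (map G \<omega>) \<partial>measure_pmf (replicate_pmf n \<nu>))"
    by (rule nn_integral_mono_AE) (use pw in \<open>simp add: AE_measure_pmf_iff\<close>)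
  also have "\<dots> = ennreal (exp (- c)) * (\<integral>\<^sup>+y. G y \<partial>measure_pmf \<nu>)^n"
    by (simp add: nn_integral_cmult replicate_prod_nn)
  also have "\<dots> \<le> ennreal (exp (- c)) * 1"
    using mgf by (intro mult_left_mono) (auto intro: power_le_one_iff[THEN iffD2] simp: power_le_one)
  finally have "ennreal (measure_pmf.prob (replicate_pmf n \<nu>) Bad) \<le> ennreal (exp (- c))"
    by (simp add: measure_pmf.emeasure_eq_measure)
  then show ?thesis unfolding Bad_def by (simp add: ennreal_le_iff)
qed

lemma reward_lb:
  fixes p0 :: "'q pmf" and \<pi> :: "'q \<Rightarrow> 'a pmf" and s :: "'q \<Rightarrow> 'a \<Rightarrow> real"
  assumes s_range: "\<And>q a. 0 \<le> s q a \<and> s q a \<le> 1" and tau: "0 < \<tau>"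
  shows "\<tau> * measure_pmf.expectation p0 (\<lambda>q. measure_pmf.prob (\<pi> q) {a. \<tau> \<le> s q a}) \<le> exp_reward p0 \<pi> s"
    and "0 \<le> exp_reward p0 \<pi> s"
proof -
  define M where "M = bind_pmf p0 (\<lambda>q. map_pmf (\<lambda>a. (q, a)) (\<pi> q))"
  have int: "integrable (measure_pmf M) (\<lambda>(q, a). s q a)"
    by (rule pmf_integrable_bounded[where B=1]) (use s_range in \<open>auto split: prod.splits\<close>)
  have intp: "integrable (measure_pmf p0) (\<lambda>q. \<tau> * measure_pmf.prob (\<pi> q) {a. \<tau> \<le> s q a})"
    by (rule pmf_integrable_bounded[where B=\<tau>]) (use tau in \<open>auto intro: mult_le_one simp: abs_mult\<close>)
  have "ennreal (measure_pmf.expectation p0 (\<lambda>q. \<tau> * measure_pmf.prob (\<pi> q) {a. \<tau> \<le> s q a}))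
      = (\<integral>\<^sup>+q. ennreal (\<tau> * measure_pmf.prob (\<pi> q) {a. \<tau> \<le> s q a}) \<partial>measure_pmf p0)"
    by (rule nn_integral_eq_integral[OF intp, symmetric]) (use tau in simp)
  also have "\<dots> = (\<integral>\<^sup>+q. (\<integral>\<^sup>+a. ennreal \<tau> * indicator {a. \<tau> \<le> s q a} a \<partial>measure_pmf (\<pi> q)) \<partial>measure_pmf p0)"
    by (rule nn_integral_cong) (use tau in \<open>simp add: nn_integral_cmult ennreal_mult measure_pmf.emeasure_eq_measure\<close>)
  also have "\<dots> \<le> (\<integral>\<^sup>+q. (\<integral>\<^sup>+a. ennreal (s q a) \<partial>measure_pmf (\<pi> q)) \<partial>measure_pmf p0)"
    by (intro nn_integral_mono) (auto simp: indicator_def intro: ennreal_leI)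
  also have "\<dots> = (\<integral>\<^sup>+x. ennreal ((\<lambda>(q, a). s q a) x) \<partial>measure_pmf M)"
    unfolding M_def by simp
  also have "\<dots> = ennreal (measure_pmf.expectation M (\<lambda>(q, a). s q a))"
    by (rule nn_integral_eq_integral[OF int]) (use s_range in \<open>auto split: prod.splits\<close>)
  finally have "measure_pmf.expectation p0 (\<lambda>q. \<tau> * measure_pmf.prob (\<pi> q) {a. \<tau> \<le> s q a})
      \<le> measure_pmf.expectation M (\<lambda>(q, a). s q a)"
    by (subst (asm) ennreal_le_iff) (auto intro!: integral_nonneg_AE simp: s_range split: prod.splits)
  then show "\<tau> * measure_pmf.expectation p0 (\<lambda>q. measure_pmf.prob (\<pi> q) {a. \<tau> \<le> s q a}) \<le> exp_reward p0 \<pi> s"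
    unfolding exp_reward_def M_def by simp
  show "0 \<le> exp_reward p0 \<pi> s"
    unfolding exp_reward_def by (auto intro!: integral_nonneg_AE simp: s_range split: prod.splits)
qed

lemma final_ineq:
  fixes V \<tau> Er W Z amin N c :: real
  assumes tau: "0 < \<tau>" and N: "0 < N" and c: "0 \<le> c" and amin: "0 < amin" "amin \<le> Z"
    and V0: "0 \<le> V" and V1: "\<tau> * (1 - Er) \<le> V" and W1: "amin * Er \<le> W" and W2: "N * (W / (2 * Z)) \<le> c"
  shows "\<tau> * (1 - Z / amin * sqrt (2 * c / N)) \<le> V"
proof -
  define x where "x = 2 * c / N"
  have Z: "0 < Z" using amin by simp
  have x0: "0 \<le> x" unfolding x_def using c N by simp
  have R1: "1 \<le> Z / amin" using amin by simp
  have "W \<le> 2 * c * Z / N" using W2 N Z by (simp add: field_simps)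
  then have "amin * Er \<le> 2 * c * Z / N" using W1 by simp
  then have Er: "Er \<le> Z / amin * x" unfolding x_def using amin N by (simp add: field_simps)
  show ?thesis
  proof (cases "x \<le> 1")
    case True
    have "x = sqrt x * sqrt x" using x0 by simp
    also have "\<dots> \<le> 1 * sqrt x" using True x0 by (intro mult_right_mono) auto
    finally have "x \<le> sqrt x" by simp
    then have "Z / amin * x \<le> Z / amin * sqrt x" using R1 by (intro mult_left_mono) auto
    then have "1 - Z / amin * sqrt x \<le> 1 - Er" using Er by simp
    then have "\<tau> * (1 - Z / amin * sqrt x) \<le> \<tau> * (1 - Er)" using tau by simp
    then show ?thesis using V1 unfolding x_def by simp
  next
    case False
    then have "1 \<le> sqrt x" by simp
    then have "1 * 1 \<le> Z / amin * sqrt x" using R1 by (intro mult_mono) auto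
    then have "1 - Z / amin * sqrt x \<le> 0" by simp
    then have "\<tau> * (1 - Z / amin * sqrt x) \<le> 0" using tau by (intro mult_nonneg_nonpos) auto
    then show ?thesis using V0 unfolding x_def by simp
  qed
qed

theorem theorem4p1:
  fixes p0 :: "'q pmf"
    and s :: "'q \<Rightarrow> 'a \<Rightarrow> real"
    and \<tau> :: real
    and Models :: "('q \<Rightarrow> 'a pmf) set"
    and \<pi>t :: "'q \<Rightarrow> 'a pmf"
    and est :: "('q \<times> 'a) list \<Rightarrow> ('q \<Rightarrow> 'a pmf)"
    and n m :: nat
    and \<delta> :: real
  assumes s_range: "\<And>q a. 0 \<le> s q a \<and> s q a \<le> 1"
    and tau: "0 < \<tau>" "\<tau> \<le> 1"
    and fin: "finite Models"
    and cur: "\<pi>t \<in> Models"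
    and alpha_pos: "\<And>q. 0 < acc_rate \<pi>t s \<tau> q"
    and realizable: "(\<lambda>q. cond_pmf (\<pi>t q) {a. \<tau> \<le> s q a}) \<in> Models"
    and est_in: "\<And>D. est D \<in> Models"
    and est_max: "\<And>D \<pi>. \<pi> \<in> Models \<Longrightarrow> avg_loglik \<pi> D \<le> avg_loglik (est D) D"
    and ess_pos: "ess_inf (measure_pmf p0) (acc_rate \<pi>t s \<tau>) > 0"
    and m_pos: "1 \<le> m"
    and delta: "0 < \<delta>" "\<delta> < 1"
  shows "measure_pmf.prob (sample_pmf n m p0 \<pi>t)
           {\<omega>. let D = accepted_data s \<tau> \<omega>; N = length D in
                 0 < N \<longrightarrow>
                 exp_reward p0 (est D) s \<ge>
                   \<tau> * (1 - glob_acc_m m p0 \<pi>t s \<tau> / real_of_ereal (ess_acc_m m p0 \<pi>t s \<tau>)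
                          * sqrt (2 * ln (real (card Models) / \<delta>) / real N))}
         \<ge> 1 - \<delta>
       \<and> (\<forall>m1 m2. 1 \<le> m1 \<longrightarrow> m1 \<le> m2 \<longrightarrow>
            glob_acc_m m2 p0 \<pi>t s \<tau> / real_of_ereal (ess_acc_m m2 p0 \<pi>t s \<tau>)
            \<le> glob_acc_m m1 p0 \<pi>t s \<tau> / real_of_ereal (ess_acc_m m1 p0 \<pi>t s \<tau>))
       \<and> ((\<lambda>k. glob_acc_m k p0 \<pi>t s \<tau> / real_of_ereal (ess_acc_m k p0 \<pi>t s \<tau>))
            \<longlonglongrightarrow> 1)"
proof -
  let ?f = "acc_rate \<pi>t s \<tau>"
  have f_eq: "?f q = measure_pmf.prob (\<pi>t q) {a. \<tau> \<le> s q a}" for q by (simp add: acc_rate_def)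
  have f_ge0: "0 \<le> ?f q" and f_le1: "?f q \<le> 1" for q unfolding f_eq by auto
  have ne: "set_pmf (\<pi>t q) \<inter> {a. \<tau> \<le> s q a} \<noteq> {}" for q
    using alpha_pos[of q] measure_pmf_zero_iff[of "\<pi>t q" "{a. \<tau> \<le> s q a}"] unfolding f_eq by auto
  define a0 where "a0 = real_of_ereal (ess_inf (measure_pmf p0) ?f)"
  note A0 = ess_a0[OF ess_pos f_le1, folded a0_def]
  have accm_eq: "acc_rate_m k \<pi>t s \<tau> = (\<lambda>q. 1 - (1 - ?f q)^k)" for k
    by (rule ext) (simp add: acc_rate_m_def)
  have glob_eq: "glob_acc_m k p0 \<pi>t s \<tau> = measure_pmf.expectation p0 (\<lambda>q. 1 - (1 - ?f q)^k)" for k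
    by (simp add: glob_acc_m_def accm_eq)
  have ess_eq: "ess_acc_m k p0 \<pi>t s \<tau> = ereal (1 - (1 - a0)^k)" if k: "1 \<le> k" for k
    unfolding ess_acc_m_def accm_eq
    by (rule ess_phi[OF A0(1) A0(2) A0(3) A0(4) f_le1 k])
  have ratio_eq: "glob_acc_m k p0 \<pi>t s \<tau> / real_of_ereal (ess_acc_m k p0 \<pi>t s \<tau>)
      = measure_pmf.expectation p0 (\<lambda>q. 1 - (1 - ?f q)^k) / (1 - (1 - a0)^k)" for k
  proof (cases "k = 0")
    case True
    then show ?thesis by (simp add: glob_eq)
  next
    case False
    then show ?thesis using ess_eq[of k] glob_eq[of k] by simp
  qed
  note RP = ratio_parts[where p=p0 and f="acc_rate \<pi>t s \<tau>", OF A0(2) A0(3) A0(4) f_le1 f_ge0]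
  have part2: "\<forall>m1 m2. 1 \<le> m1 \<longrightarrow> m1 \<le> m2 \<longrightarrow>
            glob_acc_m m2 p0 \<pi>t s \<tau> / real_of_ereal (ess_acc_m m2 p0 \<pi>t s \<tau>)
            \<le> glob_acc_m m1 p0 \<pi>t s \<tau> / real_of_ereal (ess_acc_m m1 p0 \<pi>t s \<tau>)"
    unfolding ratio_eq using RP(1) by blast
  have part3: "(\<lambda>k. glob_acc_m k p0 \<pi>t s \<tau> / real_of_ereal (ess_acc_m k p0 \<pi>t s \<tau>)) \<longlonglongrightarrow> 1"
    unfolding ratio_eq using RP(2) by simp
  define \<phi> where "\<phi> = (\<lambda>q. 1 - (1 - ?f q)^m)"
  define Zm where "Zm = measure_pmf.expectation p0 \<phi>"
  define amin where "amin = 1 - (1 - a0)^m"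
  have Zm_eq: "glob_acc_m m p0 \<pi>t s \<tau> = Zm" unfolding Zm_def \<phi>_def glob_eq ..
  have amin_eq: "real_of_ereal (ess_acc_m m p0 \<pi>t s \<tau>) = amin"
    unfolding amin_def using ess_eq[OF m_pos] by simp
  have amin_pos: "0 < amin"
  proof -
    have "(1 - a0)^m < 1" using A0(2,3) m_pos by (subst power_less_one_iff) auto
    then show ?thesis unfolding amin_def by simp
  qed
  have phi_lb: "amin \<le> \<phi> q" if "q \<in> set_pmf p0" for q
    unfolding amin_def \<phi>_def using A0(4)[OF that] f_le1[of q] by (auto intro!: power_mono)
  have phi01: "0 \<le> \<phi> q" "\<phi> q \<le> 1" for q
  proof -
    have "0 \<le> (1 - ?f q)^m" "(1 - ?f q)^m \<le> 1" using f_ge0[of q] f_le1[of q] by (auto intro: power_le_one)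
    then show "0 \<le> \<phi> q" "\<phi> q \<le> 1" unfolding \<phi>_def by auto
  qed
  have int_phi: "integrable (measure_pmf p0) \<phi>"
    by (rule pmf_integrable_bounded[where B=1]) (use phi01 in auto)
  have amin_Zm: "amin \<le> Zm"
  proof -
    have "measure_pmf.expectation p0 (\<lambda>q. amin) \<le> Zm" unfolding Zm_def
      by (rule integral_mono_AE) (use int_phi phi_lb in \<open>auto simp: AE_measure_pmf_iff\<close>)
    then show ?thesis by simp
  qed
  have Zm_pos: "0 < Zm" using amin_pos amin_Zm by simp
  define K where "K = card Models"
  have K1: "1 \<le> K" unfolding K_def using fin cur by (metis One_nat_def Suc_leI card_gt_0_iff empty_iff)
  define c where "c = ln (real K / \<delta>)"
  have c_pos: "0 < c" unfolding c_def using K1 delta by (simp add: ln_gt_zero_iff field_simps)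
  have exp_c: "exp (- c) = \<delta> / real K"
    unfolding c_def using K1 delta by (simp add: exp_minus exp_ln field_simps)
  define \<rho> where "\<rho> = (\<lambda>\<pi> q. 1 - measure_pmf.prob ((\<pi>::'q \<Rightarrow> 'a pmf) q) {a. \<tau> \<le> s q a})"
  define W where "W = (\<lambda>\<pi>. measure_pmf.expectation p0 (\<lambda>q. \<phi> q * \<rho> \<pi> q))"
  define h where "h = (\<lambda>\<pi>. W \<pi> / (2 * Zm))"
  define \<sigma> where "\<sigma> = (\<lambda>q. cond_pmf (\<pi>t q) {a. \<tau> \<le> s q a})"
  define \<nu> where "\<nu> = bind_pmf p0 (\<lambda>q. map_pmf (\<lambda>as. (q, as)) (replicate_pmf m (\<pi>t q)))"
  have sample_eq: "sample_pmf n m p0 \<pi>t = replicate_pmf n \<nu>" unfolding sample_pmf_def \<nu>_def ..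
  have acc_eq: "accepted_data s \<tau> = List.map_filter (obs (\<lambda>q a. \<tau> \<le> s q a))"
    by (rule ext) (simp add: accepted_data_def obs_def)
  define Bad where "Bad = (\<lambda>\<pi>. {\<omega>. let D = List.map_filter (obs (\<lambda>q a. \<tau> \<le> s q a)) \<omega> in
                 0 < length D \<and> avg_loglik \<sigma> D \<le> avg_loglik \<pi> D \<and> c < real (length D) * h \<pi>})"
  have bad: "measure_pmf.prob (replicate_pmf n \<nu>) (Bad \<pi>) \<le> exp (- c)" for \<pi>
  proof -
    have hW: "measure_pmf.expectation p0 (\<lambda>q. (1 - (1 - measure_pmf.prob (\<pi>t q) {a. \<tau> \<le> s q a})^m) * (1 - measure_pmf.prob (\<pi> q) {a. \<tau> \<le> s q a}))
     = 2 * measure_pmf.expectation p0 (\<lambda>q. 1 - (1 - measure_pmf.prob (\<pi>t q) {a. \<tau> \<le> s q a})^m) * h \<pi>"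
      using Zm_pos unfolding h_def W_def Zm_def \<phi>_def \<rho>_def f_eq by simp
    show ?thesis unfolding Bad_def \<nu>_def \<sigma>_def
      by (rule bad_prob[where pt=\<pi>t and P="\<lambda>q a. \<tau> \<le> s q a", OF ne hW])
  qed
  define G where "G = {\<omega>. let D = accepted_data s \<tau> \<omega>; N = length D in
                 0 < N \<longrightarrow>
                 exp_reward p0 (est D) s \<ge>
                   \<tau> * (1 - glob_acc_m m p0 \<pi>t s \<tau> / real_of_ereal (ess_acc_m m p0 \<pi>t s \<tau>)
                          * sqrt (2 * ln (real (card Models) / \<delta>) / real N))}"
  have sub: "UNIV - G \<subseteq> (\<Union>\<pi>\<in>Models. Bad \<pi>)"
  proof
    fix \<omega> assume "\<omega> \<in> UNIV - G"
    define D where "D = accepted_data s \<tau> \<omega>"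
    define N where "N = length D"
    define \<pi> where "\<pi> = est D"
    have N0: "0 < N" and fail: "\<not> \<tau> * (1 - Zm / amin * sqrt (2 * c / real N)) \<le> exp_reward p0 \<pi> s"
      using \<open>\<omega> \<in> UNIV - G\<close> unfolding G_def D_def N_def \<pi>_def Let_def Zm_eq amin_eq c_def K_def by auto
    have ll: "avg_loglik \<sigma> D \<le> avg_loglik \<pi> D" unfolding \<pi>_def \<sigma>_def by (rule est_max[OF realizable])
    have int_rho: "integrable (measure_pmf p0) (\<rho> \<pi>)"
      by (rule pmf_integrable_bounded[where B=1]) (auto simp: \<rho>_def)
    have int_prob: "integrable (measure_pmf p0) (\<lambda>q. measure_pmf.prob (\<pi> q) {a. \<tau> \<le> s q a})"
      by (rule pmf_integrable_bounded[where B=1]) auto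
    have int_pr: "integrable (measure_pmf p0) (\<lambda>q. \<phi> q * \<rho> \<pi> q)"
      by (rule pmf_integrable_bounded[where B=1]) (use phi01 in \<open>auto simp: \<rho>_def abs_mult intro!: mult_le_one\<close>)
    have "c < real N * h \<pi>"
    proof (rule ccontr)
      assume "\<not> c < real N * h \<pi>"
      then have W2: "real N * (W \<pi> / (2 * Zm)) \<le> c" unfolding h_def by simp
      have V1: "\<tau> * (1 - measure_pmf.expectation p0 (\<rho> \<pi>)) \<le> exp_reward p0 \<pi> s"
      proof -
        have "measure_pmf.expectation p0 (\<rho> \<pi>) = 1 - measure_pmf.expectation p0 (\<lambda>q. measure_pmf.prob (\<pi> q) {a. \<tau> \<le> s q a})"
          unfolding \<rho>_def using int_prob by (simp add: Bochner_Integration.integral_diff)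
        then show ?thesis using reward_lb(1)[OF s_range tau(1), of p0 \<pi>] by simp
      qed
      have W1: "amin * measure_pmf.expectation p0 (\<rho> \<pi>) \<le> W \<pi>"
      proof -
        have "amin * measure_pmf.expectation p0 (\<rho> \<pi>) = measure_pmf.expectation p0 (\<lambda>q. amin * \<rho> \<pi> q)"
          by simp
        also have "\<dots> \<le> W \<pi>" unfolding W_def
        proof (rule integral_mono_AE)
          show "AE q in measure_pmf p0. amin * \<rho> \<pi> q \<le> \<phi> q * \<rho> \<pi> q"
            unfolding AE_measure_pmf_iff using phi_lb by (auto intro!: mult_right_mono simp: \<rho>_def)
        qed (use int_rho int_pr in auto)
        finally show ?thesis .
      qed
      have "\<tau> * (1 - Zm / amin * sqrt (2 * c / real N)) \<le> exp_reward p0 \<pi> s"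
        by (rule final_ineq[OF tau(1) _ _ amin_pos amin_Zm reward_lb(2)[OF s_range tau(1)] V1 W1 W2])
           (use N0 c_pos in auto)
      then show False using fail by simp
    qed
    then have "\<omega> \<in> Bad \<pi>" unfolding Bad_def using N0 ll
      by (simp add: Let_def D_def N_def acc_eq[symmetric])
    moreover have "\<pi> \<in> Models" unfolding \<pi>_def by (rule est_in)
    ultimately show "\<omega> \<in> (\<Union>\<pi>\<in>Models. Bad \<pi>)" by blast
  qed
  have "measure_pmf.prob (replicate_pmf n \<nu>) (UNIV - G) \<le> measure_pmf.prob (replicate_pmf n \<nu>) (\<Union>\<pi>\<in>Models. Bad \<pi>)"
    using sub by (intro measure_pmf.finite_measure_mono) auto
  also have "\<dots> \<le> (\<Sum>\<pi>\<in>Models. measure_pmf.prob (replicate_pmf n \<nu>) (Bad \<pi>))"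
    using fin by (intro measure_pmf.finite_measure_subadditive_finite) auto
  also have "\<dots> \<le> (\<Sum>\<pi>\<in>Models. exp (- c))"
    by (intro sum_mono bad)
  also have "\<dots> = \<delta>" using K1 unfolding exp_c by (simp add: K_def[symmetric])
  finally have fail_le: "measure_pmf.prob (replicate_pmf n \<nu>) (UNIV - G) \<le> \<delta>" .
  have "measure_pmf.prob (replicate_pmf n \<nu>) G = 1 - measure_pmf.prob (replicate_pmf n \<nu>) (UNIV - G)"
    using measure_pmf.prob_compl[of "UNIV - G" "replicate_pmf n \<nu>"] by (simp add: Diff_Diff_Int)
  then have part1: "measure_pmf.prob (sample_pmf n m p0 \<pi>t) G \<ge> 1 - \<delta>"
    using fail_le unfolding sample_eq by simp
  show ?thesis
    using part1 part2 part3 unfolding G_def by blast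
qed


end
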